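(* There exist constants $\varepsilon>0$ and $C>0$ such that $\tilde g(n)\le C(2-\varepsilon)^n$ for all positive integers $n$.
   Context: $[n]_0=\{0,1,\dots,n\}$, $S_1+S_2=\{u+v:u\in S_1,v\in S_2\}$. $\tilde g(n)$ is the sum of $2^{-|(S_1+S_2)\cap[n]_0|}$ over all pairs $S_1,S_2\subseteq[n]_0$ such that $0\in S_1\cap S_2$, $n+1\notin S_1+S_2$, and $k\in S_1+S_2$ for every integer $k$ with $\frac{3n}{4}+1\le k\le\frac{15n}{16}$. *)

theory Defs
  imports Complex_Main
begin

definition sumset :: "nat set \<Rightarrow> nat set \<Rightarrow> nat set" where
  "sumset S1 S2 = {u + v | u v. u \<in> S1 \<and> v \<in> S2}"

definition admissible :: "nat \<Rightarrow> nat set \<Rightarrow> nat set \<Rightarrow> bool" where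
  "admissible n S1 S2 \<longleftrightarrow>
     S1 \<subseteq> {0..n} \<and> S2 \<subseteq> {0..n} \<and> 0 \<in> S1 \<and> 0 \<in> S2 \<and>
     n + 1 \<notin> sumset S1 S2 \<and>
     (\<forall>k::nat. 3 * real n / 4 + 1 \<le> real k \<and> real k \<le> 15 * real n / 16 \<longrightarrow> k \<in> sumset S1 S2)"

definition g_tilde :: "nat \<Rightarrow> real" where
  "g_tilde n = (\<Sum>(S1, S2) \<in> {(S1, S2). admissible n S1 S2}.
                 (1/2) ^ card (sumset S1 S2 \<inter> {0..n}))"

end

theory Submission
  imports Defs "HOL-Library.FuncSet"
begin

definition wblk :: "bool \<Rightarrow> bool \<times> bool \<times> bool \<times> bool \<Rightarrow> real" where
  "wblk x c = (case c of (a,b,c',d) \<Rightarrow> (if a \<or> b then 1/2 else 1) * (if c' \<or> d \<or> x then 1/2 else 1))"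

definition Cfg :: "(bool \<times> bool \<times> bool \<times> bool) set" where
  "Cfg = {(False,False,False,False),(False,False,False,True),(False,True,False,False),(False,True,False,True),
  (True,False,False,False),(True,True,False,False),(False,False,True,False),(False,False,True,True),(True,False,True,False)}"

lemma in_Cfg: "\<not>(a \<and> d) \<Longrightarrow> \<not>(c \<and> b) \<Longrightarrow> (a,b,c,d) \<in> Cfg"
  unfolding Cfg_def by (cases a; cases b; cases c; cases d) simp_all

lemma finite_Cfg: "finite Cfg" by (simp add: Cfg_def)

lemma block_sum: "sum (wblk x) Cfg = (if x then 13/4 else 9/2)"
  unfolding Cfg_def by (cases x) (simp_all add: wblk_def)

lemma wblk_nonneg: "wblk x c \<ge> 0"
  unfolding wblk_def by (auto split: prod.splits)

lemma numeric:
  fixes t p q n :: nat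
  assumes "t \<le> p" "p \<le> 8*q+7" "t \<ge> 3*q - 12" "16*q \<le> n"
  shows "4 * (13/4::real)^t * (9/2)^(p - t) \<le> (4 * (9/2)^7 * (18/13)^12) * (2 - 1/1000)^n"
proof -
  have e1: "(13/4::real)^t * (9/2)^(p - t) = (9/2)^p * (13/18)^t"
  proof -
    have "(9/2::real)^p = (9/2)^(p-t) * (9/2)^t" using assms(1)
      by (metis le_add_diff_inverse2 power_add)
    moreover have "(13/4::real)^t = (13/18)^t * (9/2)^t"
      by (simp add: power_mult_distrib[symmetric])
    ultimately show ?thesis by simp
  qed
  have e2: "(13/18::real)^t \<le> (13/18)^(3*q-12)"
    by (rule power_decreasing) (use assms(3) in auto)
  have e3: "(13/18::real)^(3*q-12) \<le> (13/18)^(3*q) * (18/13)^12"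
  proof -
    have "(13/18::real)^(3*q) \<ge> (13/18)^(3*q-12+12)"
      by (rule power_decreasing) auto
    hence "(13/18::real)^(3*q) \<ge> (13/18)^(3*q-12) * (13/18)^12" by (simp add: power_add)
    hence "(13/18::real)^(3*q) * (18/13)^12 \<ge> (13/18)^(3*q-12) * ((13/18)^12 * (18/13)^12)"
      by (simp add: mult.assoc)
    moreover have "(13/18::real)^12 * (18/13)^12 = 1" by (simp only: power_mult_distrib[symmetric]) simp
    ultimately show ?thesis by simp
  qed
  have e4: "(9/2::real)^p \<le> (9/2)^(8*q+7)"
    by (rule power_increasing) (use assms(2) in auto)
  have e5: "(9/2::real)^(8*q+7) * (13/18)^(3*q) = (9/2)^7 * ((9/2)^8 * (13/18)^3)^q"
    by (simp add: power_add power_mult power_mult_distrib)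
  have e6: "((9/2::real)^8 * (13/18)^3)^q \<le> ((2-1/1000)^16)^q"
    by (rule power_mono) (simp_all add: power_divide)
  have e7: "((2-1/1000::real)^16)^q \<le> (2-1/1000)^n"
    by (simp only: power_mult[symmetric]) (rule power_increasing, use assms(4) in auto)
  have "(13/4::real)^t * (9/2)^(p - t) \<le> (9/2)^(8*q+7) * ((13/18)^(3*q) * (18/13)^12)"
    unfolding e1 by (rule mult_mono[OF e4 order.trans[OF e2 e3]]) auto
  also have "\<dots> = (9/2)^7 * ((9/2)^8 * (13/18)^3)^q * (18/13)^12"
    using e5 by (simp add: mult.assoc[symmetric])
  also have "\<dots> \<le> (9/2)^7 * (2-1/1000)^n * (18/13)^12"
    using e6 e7 by (intro mult_right_mono mult_left_mono) auto
  finally show ?thesis by (simp add: mult_ac)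
qed

lemma prod_indicator_pow:
  assumes "finite P" "L \<subseteq> P"
  shows "(\<Prod>i\<in>P. if i \<in> L then (c::real) else 1) = c ^ card L"
proof -
  have "P \<inter> {x. x \<in> L} = L" using assms(2) by blast
  thus ?thesis using assms(1) by (simp add: prod.If_cases)
qed

lemma sumset_left: "0 \<in> S2 \<Longrightarrow> x \<in> S1 \<Longrightarrow> x \<in> sumset S1 S2"
  unfolding sumset_def by force

lemma sumset_right: "0 \<in> S1 \<Longrightarrow> x \<in> S2 \<Longrightarrow> x \<in> sumset S1 S2"
  unfolding sumset_def by force

lemma weight_bound:
  fixes n :: nat and J :: "nat set"
  assumes z: "0 \<in> S1" "0 \<in> S2"
    and hJ: "\<And>i. i \<in> J \<Longrightarrow> n+1-i \<in> sumset S1 S2"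
    and hS: "S1 \<subseteq> {0..n}" "S2 \<subseteq> {0..n}"
  shows "(1/2::real)^card(sumset S1 S2 \<inter> {0..n})
     \<le> (\<Prod>i\<in>{1..n div 2}. wblk (i\<in>J) (i\<in>S1, i\<in>S2, n+1-i\<in>S1, n+1-i\<in>S2))"
proof -
  define P where "P = {1..n div 2}"
  define L where "L = {i\<in>P. i \<in> S1 \<or> i \<in> S2}"
  define U where "U = {i\<in>P. n+1-i \<in> S1 \<or> n+1-i \<in> S2 \<or> i \<in> J}"
  define f where "f = (\<lambda>i::nat. n+1-i)"
  have fP: "finite P" unfolding P_def by simp
  have LP: "L \<subseteq> P" and UP: "U \<subseteq> P" unfolding L_def U_def by auto
  have "(\<Prod>i\<in>P. wblk (i\<in>J) (i\<in>S1, i\<in>S2, n+1-i\<in>S1, n+1-i\<in>S2))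
      = (\<Prod>i\<in>P. (if i\<in>L then 1/2 else 1) * (if i\<in>U then 1/2 else 1))"
    by (rule prod.cong) (auto simp: wblk_def L_def U_def)
  also have "\<dots> = (\<Prod>i\<in>P. if i\<in>L then 1/2 else 1) * (\<Prod>i\<in>P. if i\<in>U then 1/2 else 1)"
    by (rule prod.distrib)
  also have "\<dots> = (1/2)^card L * (1/2)^card U"
    using prod_indicator_pow[OF fP LP] prod_indicator_pow[OF fP UP] by simp
  also have "\<dots> = (1/2)^(card L + card U)" by (simp add: power_add)
  finally have eq: "(\<Prod>i\<in>P. wblk (i\<in>J) (i\<in>S1, i\<in>S2, n+1-i\<in>S1, n+1-i\<in>S2)) = (1/2)^(card L + card U)" .
  have inj: "inj_on f U"
  proof (rule inj_onI)
    fix x y assume xy: "x \<in> U" "y \<in> U" "f x = f y"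
    have "x \<le> n" "y \<le> n" using xy(1,2) UP unfolding P_def
      by (meson atLeastAtMost_iff div_le_dividend order_trans subsetD)+
    then show "x = y" using xy(3) unfolding f_def by simp
  qed
  have disj: "L \<inter> f ` U = {}"
  proof (rule ccontr)
    assume "L \<inter> f ` U \<noteq> {}"
    then obtain i where i: "i \<in> U" "f i \<in> L" by auto
    have "i \<le> n div 2" "f i \<le> n div 2" "1 \<le> i" using i LP UP unfolding P_def by auto
    then show False unfolding f_def by linarith
  qed
  have finL: "finite L" using LP fP finite_subset by blast
  have finU: "finite U" using UP fP finite_subset by blast
  have c1: "card L + card U = card (L \<union> f ` U)"
    using card_Un_disjoint[OF finL finite_imageI[OF finU] disj] card_image[OF inj] by simp
  have sub: "L \<union> f ` U \<subseteq> sumset S1 S2 \<inter> {0..n}"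
  proof
    fix x assume "x \<in> L \<union> f ` U"
    then show "x \<in> sumset S1 S2 \<inter> {0..n}"
    proof
      assume "x \<in> L"
      then show ?thesis unfolding L_def P_def using sumset_left[OF z(2)] sumset_right[OF z(1)] by auto
    next
      assume "x \<in> f ` U"
      then obtain i where i: "i \<in> U" "x = n+1-i" unfolding f_def by auto
      then show ?thesis unfolding U_def P_def using sumset_left[OF z(2)] sumset_right[OF z(1)] hJ by auto
    qed
  qed
  have "card (L \<union> f ` U) \<le> card (sumset S1 S2 \<inter> {0..n})"
    by (rule card_mono[OF _ sub]) simp
  hence "(1/2::real)^card(sumset S1 S2 \<inter> {0..n}) \<le> (1/2)^(card L + card U)"
    unfolding c1 by (rule power_decreasing) auto
  thus ?thesis using eq unfolding P_def by simp
qed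

lemma half_cases: "(n::nat) = 2*(n div 2) \<or> n = 2*(n div 2)+1"
  by (cases "even n") (auto elim: evenE oddE)

lemma cover_cases:
  assumes z: "z \<le> (n::nat)"
  shows "z = 0 \<or> (1 \<le> z \<and> z \<le> n div 2) \<or> z = (n+1) div 2 \<or> (1 \<le> n+1-z \<and> n+1-z \<le> n div 2)"
proof -
  obtain h where "n = 2*h \<or> n = 2*h+1" using half_cases by blast
  then show ?thesis
  proof
    assume n: "n = 2*h"
    have "n div 2 = h" "(n+1) div 2 = h" unfolding n by simp_all
    then show ?thesis using z n by linarith
  next
    assume n: "n = 2*h+1"
    have "n div 2 = h" "(n+1) div 2 = h+1" unfolding n by simp_all
    then show ?thesis using z n by linarith
  qed
qed

lemma adm_basic:
  assumes "admissible n S1 S2"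
  shows "S1 \<subseteq> {0..n}" "S2 \<subseteq> {0..n}" "0 \<in> S1" "0 \<in> S2" "n+1 \<notin> sumset S1 S2"
  using assms unfolding admissible_def by blast+

lemma g_bound:
  fixes n :: nat
  defines "J \<equiv> {n div 16 + n mod 16 + 1 .. 4 * (n div 16) + n mod 16 - 12}"
  shows "g_tilde n \<le> 4 * (13/4::real)^card J * (9/2)^(n div 2 - card J)"
proof -
  define q where "q = n div 16"
  define r where "r = n mod 16"
  have nqr: "n = 16*q + r" and r15: "r \<le> 15" unfolding q_def r_def by auto
  have Jd: "J = {q + r + 1 .. 4*q + r - 12}" unfolding J_def q_def r_def by simp
  define P where "P = {1..n div 2}"
  define m where "m = (n+1) div 2"
  have fP: "finite P" unfolding P_def by simp
  have JP: "J \<subseteq> P"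
  proof
    fix i assume "i \<in> J"
    hence i1: "q + r + 1 \<le> i" "i + 12 \<le> 4*q + r" unfolding Jd by auto
    have "8*q \<le> n div 2" unfolding q_def by presburger
    moreover have "i \<le> 8*q" using i1 r15 by linarith
    moreover have "1 \<le> i" using i1 by linarith
    ultimately show "i \<in> P" unfolding P_def by simp
  qed
  have hJ: "n+1-i \<in> sumset S1 S2" if adm: "admissible n S1 S2" and iJ: "i \<in> J" for S1 S2 i
  proof -
    have i1: "q + r + 1 \<le> i" "i + 12 \<le> 4*q + r" using iJ unfolding Jd by auto
    have "i \<le> n" using i1 nqr by linarith
    hence rk: "real (n+1-i) = real n + 1 - real i" by (simp add: of_nat_diff)
    have rn: "real n = 16 * real q + real r" using nqr by simp
    have "real r \<le> 15" using r15 by simp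
    moreover have "real q + real r + 1 \<le> real i" "real i + 12 \<le> 4*real q + real r"
      using i1 by (simp_all only: of_nat_add[symmetric] of_nat_mult[symmetric] of_nat_le_iff of_nat_numeral of_nat_1)
    ultimately have "3 * real n / 4 + 1 \<le> real (n+1-i) \<and> real (n+1-i) \<le> 15 * real n / 16"
      unfolding rk rn by (intro conjI; simp add: field_simps; linarith)
    thus ?thesis using adm unfolding admissible_def by blast
  qed
  define Adm where "Adm = {(S1, S2). admissible n S1 S2}"
  have finAdm: "finite Adm"
  proof (rule finite_subset)
    show "Adm \<subseteq> Pow {0..n} \<times> Pow {0..n}" unfolding Adm_def using adm_basic by blast
  qed simp
  define F where "F = (\<lambda>S1 S2 i. (i\<in>S1, i\<in>S2, n+1-i\<in>S1, n+1-i\<in>S2))"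
  define enc where "enc = (\<lambda>(S1::nat set, S2::nat set). (restrict (F S1 S2) P, (m\<in>S1, m\<in>S2)))"
  define Wt where "Wt = (\<lambda>g. \<Prod>i\<in>P. wblk (i\<in>J) (g i))"
  define W where "W = (\<lambda>(g::nat \<Rightarrow> bool \<times> bool \<times> bool \<times> bool, b::bool \<times> bool). Wt g)"
  have Wt_nonneg: "Wt g \<ge> 0" for g unfolding Wt_def by (intro prod_nonneg) (simp add: wblk_nonneg)
  have inj: "inj_on enc Adm"
  proof (rule inj_onI)
    fix x y assume x: "x \<in> Adm" and y: "y \<in> Adm" and e: "enc x = enc y"
    obtain S1 S2 where xs: "x = (S1, S2)" by (cases x)
    obtain T1 T2 where ys: "y = (T1, T2)" by (cases y)
    have aS: "admissible n S1 S2" and aT: "admissible n T1 T2" using x y xs ys unfolding Adm_def by auto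
    have e1: "restrict (F S1 S2) P = restrict (F T1 T2) P" and e2: "(m\<in>S1) = (m\<in>T1)" "(m\<in>S2) = (m\<in>T2)"
      using e unfolding xs ys enc_def by auto
    have eF: "F S1 S2 i = F T1 T2 i" if "i \<in> P" for i
      using fun_cong[OF e1, of i] that by simp
    have key: "(z \<in> A) = (z \<in> B)"
      if zn: "z \<le> n" and zA: "0 \<in> A" and zB: "0 \<in> B" and em: "(m\<in>A) = (m\<in>B)"
        and ei: "\<And>i. i \<in> P \<Longrightarrow> (i\<in>A) = (i\<in>B) \<and> (n+1-i\<in>A) = (n+1-i\<in>B)" for z A B
    proof -
      have "z = 0 \<or> (1 \<le> z \<and> z \<le> n div 2) \<or> z = (n+1) div 2 \<or> (1 \<le> n+1-z \<and> n+1-z \<le> n div 2)"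
        using cover_cases[OF zn] .
      then consider "z = 0" | "z \<in> P" | "z = m" | "n+1-z \<in> P" unfolding P_def m_def by auto
      then show ?thesis
      proof cases
        case 4
        then have "(n+1-(n+1-z) \<in> A) = (n+1-(n+1-z) \<in> B)" using ei by blast
        moreover have "n+1-(n+1-z) = z" using zn by simp
        ultimately show ?thesis by simp
      qed (use zA zB em ei in auto)
    qed
    have "S1 = T1"
    proof (rule set_eqI)
      fix z
      show "(z \<in> S1) = (z \<in> T1)"
      proof (cases "z \<le> n")
        case True
        then show ?thesis
          by (rule key) (use adm_basic[OF aS] adm_basic[OF aT] e2 eF in \<open>auto simp: F_def\<close>)
      next
        case False
        then show ?thesis using adm_basic[OF aS] adm_basic[OF aT] by auto
      qed
    qed
    moreover have "S2 = T2"
    proof (rule set_eqI)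
      fix z
      show "(z \<in> S2) = (z \<in> T2)"
      proof (cases "z \<le> n")
        case True
        then show ?thesis
          by (rule key) (use adm_basic[OF aS] adm_basic[OF aT] e2 eF in \<open>auto simp: F_def\<close>)
      next
        case False
        then show ?thesis using adm_basic[OF aS] adm_basic[OF aT] by auto
      qed
    qed
    ultimately show "x = y" using xs ys by simp
  qed
  have sub: "enc ` Adm \<subseteq> PiE P (\<lambda>_. Cfg) \<times> UNIV"
  proof
    fix y assume "y \<in> enc ` Adm"
    then obtain S1 S2 where a: "admissible n S1 S2" and y: "y = enc (S1, S2)" unfolding Adm_def by auto
    have "F S1 S2 i \<in> Cfg" if iP: "i \<in> P" for i
    proof -
      have "i \<le> n" using iP unfolding P_def by auto
      hence ni: "i + (n+1-i) = n+1" "(n+1-i) + i = n+1" by auto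
      have nn: "n+1 \<notin> sumset S1 S2" using adm_basic[OF a] by blast
      have "\<not> (i \<in> S1 \<and> n+1-i \<in> S2)"
      proof
        assume "i \<in> S1 \<and> n+1-i \<in> S2"
        hence "i + (n+1-i) \<in> sumset S1 S2" unfolding sumset_def by blast
        thus False using nn ni by simp
      qed
      moreover have "\<not> (n+1-i \<in> S1 \<and> i \<in> S2)"
      proof
        assume "n+1-i \<in> S1 \<and> i \<in> S2"
        hence "(n+1-i) + i \<in> sumset S1 S2" unfolding sumset_def by blast
        thus False using nn ni by simp
      qed
      ultimately show ?thesis unfolding F_def by (intro in_Cfg) auto
    qed
    then show "y \<in> PiE P (\<lambda>_. Cfg) \<times> UNIV" unfolding y enc_def by auto
  qed
  have "g_tilde n = (\<Sum>(S1, S2)\<in>Adm. (1/2::real) ^ card (sumset S1 S2 \<inter> {0..n}))"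
    unfolding g_tilde_def Adm_def by simp
  also have "\<dots> \<le> (\<Sum>x\<in>Adm. W (enc x))"
  proof (rule sum_mono)
    fix x assume "x \<in> Adm"
    then obtain S1 S2 where x: "x = (S1, S2)" and a: "admissible n S1 S2" unfolding Adm_def by auto
    have "W (enc x) = (\<Prod>i\<in>{1..n div 2}. wblk (i\<in>J) (i\<in>S1, i\<in>S2, n+1-i\<in>S1, n+1-i\<in>S2))"
      unfolding x enc_def W_def Wt_def P_def F_def by (auto intro!: prod.cong)
    moreover have "(1/2::real)^card(sumset S1 S2 \<inter> {0..n}) \<le> \<dots>"
      by (rule weight_bound) (use adm_basic[OF a] hJ[OF a] in auto)
    ultimately show "(case x of (S1, S2) \<Rightarrow> (1/2::real) ^ card (sumset S1 S2 \<inter> {0..n})) \<le> W (enc x)"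
      unfolding x by simp
  qed
  also have "\<dots> = (\<Sum>y\<in>enc ` Adm. W y)"
    by (simp add: sum.reindex[OF inj] o_def)
  also have "\<dots> \<le> (\<Sum>y\<in>PiE P (\<lambda>_. Cfg) \<times> UNIV. W y)"
    by (rule sum_mono2) (use sub fP finite_Cfg Wt_nonneg in \<open>auto simp: W_def intro!: finite_PiE\<close>)
  also have "\<dots> = (\<Sum>g\<in>PiE P (\<lambda>_. Cfg). \<Sum>b\<in>(UNIV::(bool\<times>bool) set). Wt g)"
    unfolding W_def by (rule sum.cartesian_product[symmetric])
  also have "\<dots> = 4 * (\<Sum>g\<in>PiE P (\<lambda>_. Cfg). Wt g)"
  proof -
    have "card (UNIV::(bool\<times>bool) set) = 4"
      by (simp add: UNIV_Times_UNIV[symmetric] card_cartesian_product del: UNIV_Times_UNIV)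
    thus ?thesis by (simp add: sum_distrib_left)
  qed
  also have "(\<Sum>g\<in>PiE P (\<lambda>_. Cfg). Wt g) = (\<Prod>i\<in>P. \<Sum>c\<in>Cfg. wblk (i\<in>J) c)"
    unfolding Wt_def by (rule prod_sum_PiE[symmetric]) (use fP finite_Cfg in auto)
  also have "\<dots> = (\<Prod>i\<in>P. if i\<in>J then 13/4 else 9/2)"
    by (simp add: block_sum)
  also have "\<dots> = (13/4)^card J * (9/2)^(card P - card J)"
  proof -
    have "P \<inter> {x. x \<in> J} = J" "P \<inter> - {x. x \<in> J} = P - J" using JP by auto
    moreover have "card (P - J) = card P - card J" using JP fP by (simp add: card_Diff_subset finite_subset)
    ultimately show ?thesis using fP by (simp add: prod.If_cases)
  qed
  finally show ?thesis unfolding P_def by (simp add: mult.assoc)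
qed

lemma final_bound:
  fixes n :: nat
  shows "g_tilde n \<le> (4 * (9/2)^7 * (18/13)^12) * (2 - 1/1000::real)^n"
proof -
  define J where "J = {n div 16 + n mod 16 + 1 .. 4 * (n div 16) + n mod 16 - 12}"
  have "g_tilde n \<le> 4 * (13/4::real)^card J * (9/2)^(n div 2 - card J)"
    unfolding J_def by (rule g_bound)
  also have "\<dots> \<le> (4 * (9/2)^7 * (18/13)^12) * (2 - 1/1000)^n"
  proof (rule numeric[where q = "n div 16"])
    have "J \<subseteq> {1..n div 2}"
    proof
      fix i assume "i \<in> J"
      hence i1: "n div 16 + n mod 16 + 1 \<le> i" "i + 12 \<le> 4 * (n div 16) + n mod 16" unfolding J_def by auto
      have "8 * (n div 16) \<le> n div 2" by presburger
      moreover have "n mod 16 \<le> 15" by simp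
      ultimately show "i \<in> {1..n div 2}" using i1 by simp
    qed
    thus "card J \<le> n div 2" using card_mono[of "{1..n div 2}" J] by simp
    show "n div 2 \<le> 8 * (n div 16) + 7" by presburger
    show "3 * (n div 16) - 12 \<le> card J" unfolding J_def by simp
    show "16 * (n div 16) \<le> n" by presburger
  qed
  finally show ?thesis .
qed

theorem mainTheorem13:
  shows "\<exists>\<epsilon>::real. \<exists>C::real. \<epsilon> > 0 \<and> C > 0 \<and>
           (\<forall>n::nat. n \<ge> 1 \<longrightarrow> g_tilde n \<le> C * (2 - \<epsilon>) ^ n)"
proof -
  have "(1/1000::real) > 0 \<and> (4 * (9/2)^7 * (18/13)^12::real) > 0 \<and>
           (\<forall>n::nat. n \<ge> 1 \<longrightarrow> g_tilde n \<le> (4 * (9/2)^7 * (18/13)^12) * (2 - 1/1000) ^ n)"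
    using final_bound by simp
  thus ?thesis by blast
qed

end
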